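(* Let $X\subset\mathbb{R}^n$ and $U\subset\mathbb{R}^m$ be compact, $f:X\times U\to\mathbb{R}^n$ Lipschitz continuous, and consider $\dot{\mathbf{x}}(t)=f(\mathbf{x}(t),\mathbf{u}(t))$. Let $\Phi=\bigwedge_{i=1}^N\phi_i$ be an STL specification of the fragment described in the context, over $[0,T]$, such that $\Phi_a(t)\neq\emptyset$ for all $t\in[0,T]$. Let $W=X\times[0,T]$ and $\mathcal{S}^\Phi(t)=\{(x,t)\in W \mid \min_{\varphi_i\in\Phi_a(t)}\rho^{\varphi_i}(x)\geq 0\}$. Suppose there exist a time-varying set $\mathcal{C}^\Phi(t)\subset\mathcal{S}^\Phi(t)$, a continuously differentiable function $\mathcal{B}:W\to\mathbb{R}$, a continuous controller $g:X\times[0,T]\to U$ and an extended class $\mathcal{K}$ function $\alpha$ such that: $\mathcal{B}(x,t)\geq 0$ for all $(x,t)\in\mathcal{C}^\Phi(t)$; $\mathcal{B}(x,t)<0$ for all $(x,t)\in W\setminus\mathcal{C}^\Phi(t)$; and $\frac{\partial\mathcal{B}}{\partial x}(x,t) f(x,g(x,t))+\frac{\partial\mathcal{B}}{\partial t}(x,t)\geq-\alpha(\mathcal{B}(x,t))$ for all $(x,t)\in W$. Then the trajectory $\mathbf{x}_{x_0,\mathbf{u}}$ starting from $x_0$ with $(x_0,0)\in\mathcal{C}^\Phi(0)$ under $\mathbf{u}(t)=g(\mathbf{x}(t),t)$ satisfies $(\mathbf{x}_{x_0,\mathbf{u}}(t),t)\in\mathcal{C}^\Phi(t)$ for all $t\in[0,T]$,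 and $\mathbf{x}_{x_0,\mathbf{u}}\models\Phi$.
   Context: STL fragment: a predicate $\mu$ is given by a function $h:X\to\mathbb{R}$ and is true at $x$ iff $h(x)\geq0$. Non-temporal formulas $\varphi ::= \mathsf{true}\mid\mu\mid\lnot\varphi\mid\varphi_1\wedge\varphi_2\mid\varphi_1\vee\varphi_2$, with pointwise robustness $\rho^\mu(x)=h(x)$, $\rho^{\lnot\varphi}=-\rho^\varphi$, $\rho^{\varphi_1\wedge\varphi_2}=\min(\rho^{\varphi_1},\rho^{\varphi_2})$, $\rho^{\varphi_1\vee\varphi_2}=\max(\rho^{\varphi_1},\rho^{\varphi_2})$. Each $\phi_i$ is either $\square_{[a_i,b_i]}\varphi_i$ or $\lozenge_{[a_i,b_i]}\varphi_i$ with $[a_i,b_i]\subseteq[0,T]$. For a signal $\mathbf{x}$, $\rho^{\square_{[a,b]}\varphi}(\mathbf{x})=\min_{t'\in[a,b]}\rho^\varphi(\mathbf{x}(t'))$, $\rho^{\lozenge_{[a,b]}\varphi}(\mathbf{x})=\max_{t'\in[a,b]}\rho^\varphi(\mathbf{x}(t'))$, $\rho^\Phi(\mathbf{x})=\min_i\rho^{\phi_i}(\mathbf{x})$, and $\mathbf{x}\models\Phi$ iff $\rho^\Phi(\mathbf{x})\geq0$. For each $i$ define an interval $I_i=[a_i,b_i]$ if $\phi_i$ is an always formula, and $I_i=[t_i^*,t_i^*+\delta]$ for some fixed $a_i\leq t_i^*<t_i^*+\delta\leq b_i$, $\delta>0$, if $\phi_i$ is an eventually formula. The active predicate set is $\Phi_a(t)=\{\varphi_i\mid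 t\in I_i\}$. An extended class $\mathcal{K}$ function is continuous, strictly increasing, with $\alpha(0)=0$. $\mathbf{x}_{x_0,\mathbf{u}}$ denotes the trajectory from $x_0$ under input $\mathbf{u}$. *)

theory Defs
  imports "HOL-Analysis.Analysis" "HOL-Library.Extended_Real"
begin

datatype 'x ntf = TrueF | Pred "'x \<Rightarrow> real" | NotF "'x ntf"
  | AndF "'x ntf" "'x ntf" | OrF "'x ntf" "'x ntf"

fun rho :: "'x ntf \<Rightarrow> 'x \<Rightarrow> ereal" where
  "rho TrueF x = \<infinity>"
| "rho (Pred h) x = ereal (h x)"
| "rho (NotF p) x = - rho p x"
| "rho (AndF p q) x = min (rho p x) (rho q x)"
| "rho (OrF p q) x = max (rho p x) (rho q x)"

datatype 'x tf = Always real real "'x ntf" | Eventually real real "'x ntf"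

fun tf_pred :: "'x tf \<Rightarrow> 'x ntf" where
  "tf_pred (Always a b p) = p" | "tf_pred (Eventually a b p) = p"
fun tf_lo :: "'x tf \<Rightarrow> real" where
  "tf_lo (Always a b p) = a" | "tf_lo (Eventually a b p) = a"
fun tf_hi :: "'x tf \<Rightarrow> real" where
  "tf_hi (Always a b p) = b" | "tf_hi (Eventually a b p) = b"
fun is_eventually :: "'x tf \<Rightarrow> bool" where
  "is_eventually (Always a b p) = False" | "is_eventually (Eventually a b p) = True"

fun rho_tf :: "'x tf \<Rightarrow> (real \<Rightarrow> 'x) \<Rightarrow> ereal" where
  "rho_tf (Always a b p) s = (INF t'\<in>{a..b}. rho p (s t'))"
| "rho_tf (Eventually a b p) s = (SUP t'\<in>{a..b}. rho p (s t'))"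

definition rho_spec :: "'x tf list \<Rightarrow> (real \<Rightarrow> 'x) \<Rightarrow> ereal" where
  "rho_spec Phi s = Min ((\<lambda>i. rho_tf (Phi ! i) s) ` {..<length Phi})"

definition sat_spec :: "(real \<Rightarrow> 'x) \<Rightarrow> 'x tf list \<Rightarrow> bool" where
  "sat_spec s Phi \<longleftrightarrow> rho_spec Phi s \<ge> 0"

definition wf_spec :: "'x tf list \<Rightarrow> real \<Rightarrow> (nat \<Rightarrow> real) \<Rightarrow> real \<Rightarrow> bool" where
  "wf_spec Phi T tstar \<delta> \<longleftrightarrow> \<delta> > 0 \<and> (\<forall>i<length Phi.
      0 \<le> tf_lo (Phi ! i) \<and> tf_lo (Phi ! i) \<le> tf_hi (Phi ! i) \<and> tf_hi (Phi ! i) \<le> T \<and>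
      (is_eventually (Phi ! i) \<longrightarrow>
         tf_lo (Phi ! i) \<le> tstar i \<and> tstar i + \<delta> \<le> tf_hi (Phi ! i)))"

definition act_int :: "'x tf list \<Rightarrow> (nat \<Rightarrow> real) \<Rightarrow> real \<Rightarrow> nat \<Rightarrow> real set" where
  "act_int Phi tstar \<delta> i =
     (if is_eventually (Phi ! i) then {tstar i .. tstar i + \<delta>}
      else {tf_lo (Phi ! i) .. tf_hi (Phi ! i)})"

definition active :: "'x tf list \<Rightarrow> (nat \<Rightarrow> real) \<Rightarrow> real \<Rightarrow> real \<Rightarrow> 'x ntf set" where
  "active Phi tstar \<delta> t = {tf_pred (Phi ! i) | i. i < length Phi \<and> t \<in> act_int Phi tstar \<delta> i}"

text \<open>S^Phi(t), represented as the set of states x (with (x,t) in W = X x [0,T]).\<close>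
definition safe_set :: "'x set \<Rightarrow> real \<Rightarrow> 'x tf list \<Rightarrow> (nat \<Rightarrow> real) \<Rightarrow> real \<Rightarrow> real \<Rightarrow> 'x set" where
  "safe_set X T Phi tstar \<delta> t =
     {x \<in> X. t \<in> {0..T} \<and> Min ((\<lambda>p. rho p x) ` active Phi tstar \<delta> t) \<ge> 0}"

definition ext_class_K :: "(real \<Rightarrow> real) \<Rightarrow> bool" where
  "ext_class_K \<alpha> \<longleftrightarrow> continuous_on UNIV \<alpha> \<and> strict_mono \<alpha> \<and> \<alpha> 0 = 0"

end

theory Submission
  imports Defs
begin

theorem theorem2:
  fixes X :: "(real ^ 'n) set" and U :: "(real ^ 'm) set"
    and f :: "(real ^ 'n) \<times> (real ^ 'm) \<Rightarrow> real ^ 'n"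
    and T :: real and Phi :: "(real ^ 'n) tf list" and tstar :: "nat \<Rightarrow> real" and \<delta> :: real
    and C :: "real \<Rightarrow> (real ^ 'n) set"
    and B :: "(real ^ 'n) \<times> real \<Rightarrow> real"
    and Bx :: "(real ^ 'n) \<times> real \<Rightarrow> real ^ 'n" and Bt :: "(real ^ 'n) \<times> real \<Rightarrow> real"
    and g :: "(real ^ 'n) \<times> real \<Rightarrow> real ^ 'm"
    and \<alpha> :: "real \<Rightarrow> real"
    and x0 :: "real ^ 'n" and x :: "real \<Rightarrow> real ^ 'n"
  assumes X: "compact X" and U: "compact U"
    and f_lip: "\<exists>L. L-lipschitz_on (X \<times> U) f"
    and Phi_ne: "Phi \<noteq> []"
    and wf: "wf_spec Phi T tstar \<delta>"
    and active_ne: "\<forall>t\<in>{0..T}. active Phi tstar \<delta> t \<noteq> {}"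
    and C_sub: "\<forall>t\<in>{0..T}. C t \<subseteq> safe_set X T Phi tstar \<delta> t"
    and B_C1: "\<forall>p\<in>X \<times> {0..T}.
        (B has_derivative (\<lambda>(dx, dt). Bx p \<bullet> dx + Bt p * dt)) (at p within X \<times> {0..T})"
    and Bx_cont: "continuous_on (X \<times> {0..T}) Bx"
    and Bt_cont: "continuous_on (X \<times> {0..T}) Bt"
    and g_cont: "continuous_on (X \<times> {0..T}) g"
    and g_U: "\<forall>p\<in>X \<times> {0..T}. g p \<in> U"
    and \<alpha>: "ext_class_K \<alpha>"
    and B_pos: "\<forall>t\<in>{0..T}. \<forall>y\<in>C t. B (y, t) \<ge> 0"
    and B_neg: "\<forall>t\<in>{0..T}. \<forall>y\<in>X - C t. B (y, t) < 0"
    and B_cbf: "\<forall>y\<in>X. \<forall>t\<in>{0..T}.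
        Bx (y, t) \<bullet> f (y, g (y, t)) + Bt (y, t) \<ge> - \<alpha> (B (y, t))"
    and x0_C: "x0 \<in> C 0"
    and traj_init: "x 0 = x0"
    and traj_X: "\<forall>t\<in>{0..T}. x t \<in> X"
    and traj_ode: "\<forall>t\<in>{0..T}.
        (x has_vector_derivative f (x t, g (x t, t))) (at t within {0..T})"
  shows "(\<forall>t\<in>{0..T}. x t \<in> C t) \<and> sat_spec x Phi"
proof -
  define b where "b t = B (x t, t)" for t
  define db where "db t = Bx (x t, t) \<bullet> f (x t, g (x t, t)) + Bt (x t, t)" for t
  have T0: "0 \<le> T"
  proof -
    from Phi_ne have "0 < length Phi" by simp
    with wf show ?thesis unfolding wf_spec_def by force
  qed
  have bder: "(b has_derivative (\<lambda>h. h * db t)) (at t within {0..T})" if t: "t \<in> {0..T}" for t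
  proof -
    have xd: "(x has_derivative (\<lambda>h. h *\<^sub>R f (x t, g (x t, t)))) (at t within {0..T})"
      using traj_ode t by (simp add: has_vector_derivative_def)
    have pd: "((\<lambda>s. (x s, s)) has_derivative (\<lambda>h. (h *\<^sub>R f (x t, g (x t, t)), h))) (at t within {0..T})"
      by (intro has_derivative_Pair xd has_derivative_ident)
    have img: "(\<lambda>s. (x s, s)) ` {0..T} \<subseteq> X \<times> {0..T}" using traj_X by auto
    have Bd: "(B has_derivative (\<lambda>(dx, dt). Bx (x t, t) \<bullet> dx + Bt (x t, t) * dt))
        (at ((\<lambda>s. (x s, s)) t) within (\<lambda>s. (x s, s)) ` {0..T})"
    proof -
      have "(x t, t) \<in> X \<times> {0..T}" using traj_X t by auto
      then have "(B has_derivative (\<lambda>(dx, dt). Bx (x t, t) \<bullet> dx + Bt (x t, t) * dt)) (at (x t, t) within X \<times> {0..T})"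
        using B_C1 by blast
      then show ?thesis by (rule has_derivative_subset) (rule img)
    qed
    have "((B \<circ> (\<lambda>s. (x s, s))) has_derivative
        ((\<lambda>(dx, dt). Bx (x t, t) \<bullet> dx + Bt (x t, t) * dt) \<circ> (\<lambda>h. (h *\<^sub>R f (x t, g (x t, t)), h))))
        (at t within {0..T})"
      by (rule diff_chain_within[OF pd Bd])
    moreover have "((\<lambda>(dx, dt). Bx (x t, t) \<bullet> dx + Bt (x t, t) * dt) \<circ> (\<lambda>h. (h *\<^sub>R f (x t, g (x t, t)), h)))
        = (\<lambda>h. h * db t)"
      by (auto simp: db_def algebra_simps fun_eq_iff)
    moreover have "B \<circ> (\<lambda>s. (x s, s)) = b" by (auto simp: b_def fun_eq_iff)
    ultimately show ?thesis by simp
  qed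
  have bcont: "continuous_on {0..T} b"
    using bder has_derivative_continuous continuous_on_eq_continuous_within by blast
  have dbpos: "db t > 0" if "t \<in> {0..T}" "b t < 0" for t
  proof -
    have "\<alpha> (b t) < \<alpha> 0" using \<alpha> that(2) unfolding ext_class_K_def strict_mono_def by blast
    then have "\<alpha> (b t) < 0" using \<alpha> unfolding ext_class_K_def by simp
    moreover have "db t \<ge> - \<alpha> (b t)" using B_cbf traj_X that(1) by (simp add: db_def b_def)
    ultimately show ?thesis by linarith
  qed
  have bnn: "b t \<ge> 0" if t: "t \<in> {0..T}" for t
  proof (rule ccontr)
    assume neg: "\<not> b t \<ge> 0"
    define S where "S = {0..t} \<inter> b -` {0..}"
    have cS: "continuous_on {0..t} b" using bcont t by (auto intro: continuous_on_subset)
    have "closed S" unfolding S_def by (rule continuous_closed_preimage[OF cS]) auto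
    moreover have "bounded S" unfolding S_def by (rule bounded_subset[of "{0..t}"]) auto
    ultimately have "compact S" by (simp add: compact_eq_bounded_closed)
    moreover have "0 \<in> S" using B_pos x0_C traj_init T0 t by (auto simp: S_def b_def)
    ultimately obtain s where sS: "s \<in> S" and smax: "\<forall>y\<in>S. y \<le> s"
      using compact_attains_sup by blast
    have bs: "b s \<ge> 0" "0 \<le> s" "s \<le> t" using sS by (auto simp: S_def)
    have st: "s < t" using bs neg by (cases "s = t") auto
    have negs: "b y < 0" if "s < y" "y \<le> t" for y
    proof (rule ccontr)
      assume "\<not> b y < 0"
      then have "y \<in> S" using that bs by (auto simp: S_def)
      then show False using smax that by force
    qed
    have "\<exists>z\<in>{s<..<t}. b t - b s = (\<lambda>h. h * db z) (t - s)"
    proof (rule mvt_simple[OF st])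
      fix y assume "s \<le> y" "y \<le> t"
      then show "(b has_derivative (\<lambda>h. h * db y)) (at y within {s..t})"
        using bder[of y] bs t by (auto intro: has_derivative_subset)
    qed
    then obtain z where z: "s < z" "z < t" "b t - b s = (t - s) * db z" by auto
    have "db z > 0" using dbpos[of z] negs[of z] z bs t by auto
    then have "(t - s) * db z > 0" using st by simp
    then show False using z bs neg by linarith
  qed
  have inC: "\<forall>t\<in>{0..T}. x t \<in> C t"
  proof
    fix t assume t: "t \<in> {0..T}"
    show "x t \<in> C t"
    proof (rule ccontr)
      assume "x t \<notin> C t"
      then have "B (x t, t) < 0" using B_neg traj_X t by auto
      then show False using bnn[OF t] by (simp add: b_def)
    qed
  qed
  have predpos: "rho (tf_pred (Phi ! i)) (x t) \<ge> 0"
    if i: "i < length Phi" and t: "t \<in> act_int Phi tstar \<delta> i" and t0: "t \<in> {0..T}" for i t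
  proof -
    have mem: "tf_pred (Phi ! i) \<in> active Phi tstar \<delta> t" using i t unfolding active_def by blast
    have fin: "finite (active Phi tstar \<delta> t)"
    proof -
      have "active Phi tstar \<delta> t \<subseteq> (\<lambda>i. tf_pred (Phi ! i)) ` {..<length Phi}"
        unfolding active_def by auto
      then show ?thesis by (rule finite_subset) auto
    qed
    have "x t \<in> safe_set X T Phi tstar \<delta> t" using inC C_sub t0 by blast
    then have "Min ((\<lambda>p. rho p (x t)) ` active Phi tstar \<delta> t) \<ge> 0" unfolding safe_set_def by blast
    moreover have "Min ((\<lambda>p. rho p (x t)) ` active Phi tstar \<delta> t) \<le> rho (tf_pred (Phi ! i)) (x t)"
      using fin mem by (intro Min_le) auto
    ultimately show ?thesis by (rule order.trans)
  qed
  have each: "rho_tf (Phi ! i) x \<ge> 0" if i: "i < length Phi" for i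
  proof (cases "Phi ! i")
    case (Always a c p)
    have "0 \<le> tf_lo (Phi ! i) \<and> tf_hi (Phi ! i) \<le> T" using wf i unfolding wf_spec_def by blast
    then have w: "0 \<le> a" "c \<le> T" using Always by auto
    have "rho p (x t') \<ge> 0" if "t' \<in> {a..c}" for t'
      using predpos[OF i, of t'] that w Always by (auto simp: act_int_def)
    then show ?thesis using Always by (auto intro: INF_greatest)
  next
    case (Eventually a c p)
    have "\<delta> > 0 \<and> 0 \<le> tf_lo (Phi ! i) \<and> tf_hi (Phi ! i) \<le> T \<and> (is_eventually (Phi ! i) \<longrightarrow>
         tf_lo (Phi ! i) \<le> tstar i \<and> tstar i + \<delta> \<le> tf_hi (Phi ! i))" using wf i unfolding wf_spec_def by blast
    then have w: "0 \<le> a" "c \<le> T" "a \<le> tstar i" "tstar i + \<delta> \<le> c" "\<delta> > 0"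
      using Eventually by auto
    have ti: "tstar i \<in> {a..c}" using w by auto
    have "rho p (x (tstar i)) \<ge> 0"
      using predpos[OF i, of "tstar i"] w Eventually by (auto simp: act_int_def)
    also have "rho p (x (tstar i)) \<le> (SUP t'\<in>{a..c}. rho p (x t'))"
      using ti by (rule SUP_upper)
    finally show ?thesis using Eventually by simp
  qed
  have "sat_spec x Phi"
    unfolding sat_spec_def rho_spec_def
    using Phi_ne each by (subst Min_ge_iff) auto
  with inC show ?thesis by blast
qed

end
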